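(* Let $V$ be an $n$-dimensional complex vector space with complete flag $F_\bullet$, let $U\subseteq V$ be an $r$-dimensional subspace lying in the Schubert variety $\Omega_I(F_\bullet)\subseteq\mathrm{Gr}(r,V)$ for some $r$-element $I\subseteq[n]$, and let $W=V/U$. (i) If $X\subseteq U$ is a subspace of dimension $x$ with $X\in\Omega_P(F_\bullet U)\subseteq\mathrm{Gr}(x,U)$ for an $x$-element $P\subseteq[r]$, then $X\in\Omega_{I_P}(F_\bullet)\subseteq\mathrm{Gr}(x,V)$. (ii) If $Y\subseteq W$ is a subspace of dimension $y$ with $Y\in\Omega_P(F_\bullet W)\subseteq\mathrm{Gr}(y,W)$ for a $y$-element $P\subseteq[n-r]$, and $Y=Z/U$ with $U\subseteq Z\subseteq V$, then $Z\in\Omega_{I^+_P}(F_\bullet)\subseteq\mathrm{Gr}(r+y,V)$.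
   Context: $[n]=\{1,\dots,n\}$. A complete flag in an $N$-dimensional space $E$ is $0=F_0\subset F_1\subset\cdots\subset F_N=E$ with $\dim F_i=i$. For $J=\{j_1<\dots<j_k\}\subseteq[N]$, $\Omega_J(F_\bullet)=\{L\in\mathrm{Gr}(k,E):\dim(L\cap F_{j_a})\ge a,\ 1\le a\le k\}$; the Schubert cell $\Omega^\circ_J(F_\bullet)$ is the set of $k$-dimensional $L$ with $\{i\in[N]: L\cap F_i\ne L\cap F_{i-1}\}=J$. Induced flags: let $H=\{h_1<\dots<h_r\}$ be the set with $U\in\Omega^\circ_H(F_\bullet)$ and $H^c=[n]\setminus H=\{h^c_1<\dots<h^c_{n-r}\}$; then $F_kU=F_{h_k}\cap U$ ($1\le k\le r$) and $F_kW=(U+F_{h^c_k})/U$ ($1\le k\le n-r$). For $I=\{i_1<\dots<i_r\}$ and $P=\{p_1<\dots<p_x\}\subseteq[r]$, $I_P=\{i_{p_1}<\dots<i_{p_x}\}$; for $P\subseteq[n-r]$, $I^+_P=I\cup\{i^c_p:p\in P\}$ where $[n]\setminus I=\{i^c_1<\dots<i^c_{n-r}\}$. *)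

theory Defs
  imports "HOL-Analysis.Analysis"
begin

text \<open>The ambient n-dimensional complex vector space V is modelled as complex^'n,
  with n = CARD('n); linear algebra over the complex scalars via the interpretation vec.\<close>

text \<open>a-th smallest element (1-indexed) of a finite set of naturals.\<close>
definition ith :: "nat set \<Rightarrow> nat \<Rightarrow> nat" where
  "ith J a = sorted_list_of_set J ! (a - 1)"

definition complete_flag :: "nat \<Rightarrow> (nat \<Rightarrow> (complex^'n) set) \<Rightarrow> bool" where
  "complete_flag N F \<longleftrightarrow> N = CARD('n) \<and> F 0 = {0} \<and> F N = UNIV \<and>
     (\<forall>i\<le>N. vec.subspace (F i) \<and> vec.dim (F i) = i) \<and>
     (\<forall>i<N. F i \<subseteq> F (Suc i))"

definition schubert :: "(nat \<Rightarrow> (complex^'n) set) \<Rightarrow> nat set \<Rightarrow> nat \<Rightarrow> (complex^'n) set \<Rightarrow> bool" where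
  "schubert G J k L \<longleftrightarrow> finite J \<and> card J = k \<and> vec.subspace L \<and> vec.dim L = k \<and>
     (\<forall>a\<in>{1..k}. a \<le> vec.dim (L \<inter> G (ith J a)))"

text \<open>The set H with L in the Schubert cell Omega^o_H(F).\<close>
definition jumps :: "(nat \<Rightarrow> (complex^'n) set) \<Rightarrow> nat \<Rightarrow> (complex^'n) set \<Rightarrow> nat set" where
  "jumps F N L = {i\<in>{1..N}. L \<inter> F i \<noteq> L \<inter> F (i - 1)}"

definition flagU :: "(nat \<Rightarrow> (complex^'n) set) \<Rightarrow> nat \<Rightarrow> (complex^'n) set \<Rightarrow> nat \<Rightarrow> (complex^'n) set" where
  "flagU F N U k = F (ith (jumps F N U) k) \<inter> U"

text \<open>Induced flag on W = V/U, represented by preimages in V: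
  F_k W = (U + F_{h^c_k})/U is represented by U + F_{h^c_k}.\<close>
definition flagW_pre :: "(nat \<Rightarrow> (complex^'n) set) \<Rightarrow> nat \<Rightarrow> (complex^'n) set \<Rightarrow> nat \<Rightarrow> (complex^'n) set" where
  "flagW_pre F N U k = vec.span (U \<union> F (ith ({1..N} - jumps F N U) k))"

text \<open>Schubert variety in the quotient W = V/U, via the correspondence between subspaces
  Y = Z/U of W and subspaces Z of V containing U; dim (Z/U) = dim Z - dim U and
  (Z/U) \<inter> (G/U) = (Z \<inter> G)/U for subspaces Z, G containing U.\<close>
definition schubert_quot :: "(complex^'n) set \<Rightarrow> (nat \<Rightarrow> (complex^'n) set) \<Rightarrow> nat set \<Rightarrow> nat \<Rightarrow> (complex^'n) set \<Rightarrow> bool" where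
  "schubert_quot U G J k Z \<longleftrightarrow> finite J \<and> card J = k \<and> vec.subspace Z \<and> U \<subseteq> Z \<and>
     vec.dim Z - vec.dim U = k \<and>
     (\<forall>a\<in>{1..k}. a \<le> vec.dim (Z \<inter> G (ith J a)) - vec.dim U)"

definition idx_sub :: "nat set \<Rightarrow> nat set \<Rightarrow> nat set" where
  "idx_sub I P = ith I ` P"

definition idx_plus :: "nat \<Rightarrow> nat set \<Rightarrow> nat set \<Rightarrow> nat set" where
  "idx_plus N I P = I \<union> ith ({1..N} - I) ` P"

end

theory Submission
  imports Defs
begin

lemma ith_mem: "finite J \<Longrightarrow> a \<in> {1..card J} \<Longrightarrow> ith J a \<in> J"
  unfolding ith_def
  using nth_mem[of "a-1" "sorted_list_of_set J"] by auto

lemma ith_less: "finite J \<Longrightarrow> 1 \<le> a \<Longrightarrow> a < b \<Longrightarrow> b \<le> card J \<Longrightarrow> ith J a < ith J b"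
  unfolding ith_def
  using strict_sorted_list_of_set[of J] sorted_wrt_nth_less[of "(<)" "sorted_list_of_set J" "a-1" "b-1"]
  by simp

lemma ith_le_iff: "finite J \<Longrightarrow> a \<in> {1..card J} \<Longrightarrow> b \<in> {1..card J} \<Longrightarrow> ith J a \<le> ith J b \<longleftrightarrow> a \<le> b"
proof -
  assume f: "finite J" and a: "a \<in> {1..card J}" and b: "b \<in> {1..card J}"
  show ?thesis
  proof (cases a b rule: linorder_cases)
    case less then show ?thesis using ith_less[OF f, of a b] a b by simp
  next
    case greater then show ?thesis using ith_less[OF f, of b a] a b by simp
  qed simp
qed

lemma inj_ith: "finite J \<Longrightarrow> inj_on (ith J) {1..card J}"
proof (rule inj_onI)
  fix s t assume f: "finite J" and "s \<in> {1..card J}" "t \<in> {1..card J}" "ith J s = ith J t"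
  then show "s = t" using ith_le_iff[OF f, of s t] ith_le_iff[OF f, of t s] by simp
qed

lemma ith_surj: "finite J \<Longrightarrow> j \<in> J \<Longrightarrow> \<exists>a\<in>{1..card J}. ith J a = j"
proof -
  assume f: "finite J" and j: "j \<in> J"
  then obtain k where k: "k < length (sorted_list_of_set J)" "sorted_list_of_set J ! k = j"
    by (metis in_set_conv_nth set_sorted_list_of_set)
  then show ?thesis unfolding ith_def using f
    by (intro bexI[of _ "Suc k"]) auto
qed

lemma ith_image_J: "finite J \<Longrightarrow> ith J ` {1..card J} = J"
  using ith_mem ith_surj by blast

lemma cnt_ith: "finite J \<Longrightarrow> a \<in> {1..card J} \<Longrightarrow> card {i\<in>J. i \<le> ith J a} = a"
proof -
  assume f: "finite J" and a: "a \<in> {1..card J}"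
  have "{i\<in>J. i \<le> ith J a} = ith J ` {1..a}"
  proof
    show "{i\<in>J. i \<le> ith J a} \<subseteq> ith J ` {1..a}"
    proof
      fix i assume "i \<in> {i\<in>J. i \<le> ith J a}"
      then obtain b where b: "b \<in> {1..card J}" "ith J b = i" "i \<le> ith J a"
        using ith_surj f by blast
      then have "b \<le> a" using ith_le_iff[OF f b(1) a] by simp
      then show "i \<in> ith J ` {1..a}" using b by auto
    qed
    show "ith J ` {1..a} \<subseteq> {i\<in>J. i \<le> ith J a}"
    proof
      fix i assume "i \<in> ith J ` {1..a}"
      then obtain b where b: "b \<in> {1..a}" "i = ith J b" by blast
      have b2: "b \<in> {1..card J}" using b a by auto
      show "i \<in> {i\<in>J. i \<le> ith J a}"
        using ith_mem[OF f b2] ith_le_iff[OF f b2 a] b by auto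
    qed
  qed
  moreover have "inj_on (ith J) {1..a}"
    using inj_ith[OF f] a by (auto intro: inj_on_subset)
  ultimately show ?thesis by (simp add: card_image)
qed

lemma ith_unique: "finite J \<Longrightarrow> j \<in> J \<Longrightarrow> card {i\<in>J. i \<le> j} = a \<Longrightarrow> ith J a = j"
proof -
  assume f: "finite J" and j: "j \<in> J" and c: "card {i\<in>J. i \<le> j} = a"
  obtain b where b: "b \<in> {1..card J}" "ith J b = j" using ith_surj[OF f j] by blast
  have "b = a" using cnt_ith[OF f b(1)] b(2) c by simp
  then show ?thesis using b by simp
qed

lemma ith_le: "finite J \<Longrightarrow> 1 \<le> p \<Longrightarrow> p \<le> card {i\<in>J. i \<le> j} \<Longrightarrow> ith J p \<le> j"
proof (rule ccontr)
  assume f: "finite J" and p: "1 \<le> p" "p \<le> card {i\<in>J. i \<le> j}" and c: "\<not> ith J p \<le> j"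
  have pc: "p \<le> card J" using p(2) card_mono[OF f, of "{i\<in>J. i \<le> j}"] by auto
  have "{i\<in>J. i \<le> j} \<subseteq> {i\<in>J. i \<le> ith J p} - {ith J p}" using c by auto
  then have "card {i\<in>J. i \<le> j} \<le> card ({i\<in>J. i \<le> ith J p} - {ith J p})"
    by (intro card_mono) (use f in auto)
  also have "\<dots> = p - 1"
    using cnt_ith[OF f, of p] p pc ith_mem[OF f, of p] f by (simp)
  finally show False using p by simp
qed

lemma ith_image:
  assumes f: "finite S" and m: "\<And>s t. s \<in> S \<Longrightarrow> t \<in> S \<Longrightarrow> s < t \<Longrightarrow> (g::nat\<Rightarrow>nat) s < g t"
    and a: "a \<in> {1..card S}"
  shows "ith (g ` S) a = g (ith S a)"
proof -
  have le: "s \<in> S \<Longrightarrow> t \<in> S \<Longrightarrow> g s \<le> g t \<longleftrightarrow> s \<le> t" for s t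
    using m by (metis le_less not_le)
  have inj: "inj_on g S"
  proof (rule inj_onI)
    fix s t assume "s \<in> S" "t \<in> S" "g s = g t"
    then show "s = t" using le[of s t] le[of t s] by simp
  qed
  have "{y\<in>g ` S. y \<le> g (ith S a)} = g ` {s\<in>S. s \<le> ith S a}"
    using le ith_mem[OF f a] by auto
  then have "card {y\<in>g ` S. y \<le> g (ith S a)} = a"
    using cnt_ith[OF f a] inj by (simp add: card_image inj_on_subset)
  then show ?thesis using ith_unique[of "g ` S"] f ith_mem[OF f a] by auto
qed


lemma dim_zero_vec: "vec.dim ({0} :: (complex^'n) set) = 0"
  by (metis vec.dim_empty vec.dim_span vec.span_empty)

lemma dim_int_step:
  fixes S A B :: "(complex^'n) set"
  assumes "vec.subspace S" "vec.subspace A" "vec.subspace B" "A \<subseteq> B"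
  shows "vec.dim (S \<inter> B) + vec.dim A \<le> vec.dim (S \<inter> A) + vec.dim B"
proof -
  have sB: "vec.subspace (S \<inter> B)" using assms vec.subspace_inter by blast
  have e: "vec.dim {x + y |x y. x \<in> S \<inter> B \<and> y \<in> A} + vec.dim (S \<inter> B \<inter> A) = vec.dim (S \<inter> B) + vec.dim A"
    using vec.dim_sums_Int[OF sB assms(2)] .
  have "S \<inter> B \<inter> A = S \<inter> A" using assms(4) by blast
  moreover have "{x + y |x y. x \<in> S \<inter> B \<and> y \<in> A} \<subseteq> B"
    using assms(3,4) vec.subspace_add by blast
  then have "vec.dim {x + y |x y. x \<in> S \<inter> B \<and> y \<in> A} \<le> vec.dim B" by (rule vec.dim_subset)
  ultimately show ?thesis using e by simp
qed

lemma dim_quot_ineq: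
  fixes Z U G :: "(complex^'n) set"
  assumes "vec.subspace Z" "vec.subspace U" "vec.subspace G" "U \<subseteq> Z"
  shows "vec.dim (Z \<inter> vec.span (U \<union> G)) + vec.dim (U \<inter> G) \<le> vec.dim (Z \<inter> G) + vec.dim U"
proof -
  have zg: "vec.subspace (Z \<inter> G)" using assms vec.subspace_inter by blast
  have e: "vec.dim {x + y |x y. x \<in> U \<and> y \<in> Z \<inter> G} + vec.dim (U \<inter> (Z \<inter> G)) = vec.dim U + vec.dim (Z \<inter> G)"
    using vec.dim_sums_Int[OF assms(2) zg] .
  have "U \<inter> (Z \<inter> G) = U \<inter> G" using assms(4) by blast
  then have dd: "vec.dim (U \<inter> (Z \<inter> G)) = vec.dim (U \<inter> G)" by simp
  have "Z \<inter> vec.span (U \<union> G) \<subseteq> {x + y |x y. x \<in> U \<and> y \<in> Z \<inter> G}"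
  proof
    fix z assume z: "z \<in> Z \<inter> vec.span (U \<union> G)"
    obtain u g where ug: "u \<in> U" "g \<in> G" "z = u + g"
    proof -
      have sU: "vec.span U = U" and sG: "vec.span G = G" using assms(2,3) by simp_all
      have "z \<in> {x + y |x y. x \<in> vec.span U \<and> y \<in> vec.span G}"
        using vec.span_Un[of U G] z by blast
      then obtain x y where "x \<in> vec.span U" "y \<in> vec.span G" "z = x + y" by blast
      then show ?thesis using that[of x y] unfolding sU sG by blast
    qed
    have "g = z - u" using ug by simp
    then have "g \<in> Z" using vec.subspace_diff[OF assms(1)] z ug assms(4) by blast
    then show "z \<in> {x + y |x y. x \<in> U \<and> y \<in> Z \<inter> G}" using ug by blast
  qed
  then have "vec.dim (Z \<inter> vec.span (U \<union> G)) \<le> vec.dim {x + y |x y. x \<in> U \<and> y \<in> Z \<inter> G}"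
    by (rule vec.dim_subset)
  then show ?thesis using e dd by linarith
qed

lemma flag_props:
  assumes "complete_flag n (F :: nat \<Rightarrow> (complex^'n) set)"
  shows "F 0 = {0}" "F n = UNIV" "\<And>i. i \<le> n \<Longrightarrow> vec.subspace (F i)"
    "\<And>i. i \<le> n \<Longrightarrow> vec.dim (F i) = i"
    "\<And>i j. i \<le> j \<Longrightarrow> j \<le> n \<Longrightarrow> F i \<subseteq> F j"
proof -
  show "F 0 = {0}" "F n = UNIV" "\<And>i. i \<le> n \<Longrightarrow> vec.subspace (F i)"
    "\<And>i. i \<le> n \<Longrightarrow> vec.dim (F i) = i" using assms unfolding complete_flag_def by auto
  have st: "\<And>i. i < n \<Longrightarrow> F i \<subseteq> F (Suc i)" using assms unfolding complete_flag_def by auto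
  show "\<And>i j. i \<le> j \<Longrightarrow> j \<le> n \<Longrightarrow> F i \<subseteq> F j"
  proof -
    fix i j :: nat assume "i \<le> j" "j \<le> n"
    then show "F i \<subseteq> F j"
    proof (induction j)
      case 0 then show ?case by simp
    next
      case (Suc j)
      show ?case
      proof (cases "i = Suc j")
        case False
        then have "F i \<subseteq> F j" using Suc by simp
        then show ?thesis using st[of j] Suc by auto
      qed simp
    qed
  qed
qed


lemma jump_count:
  fixes F :: "nat \<Rightarrow> (complex^'n) set" and U :: "(complex^'n) set"
  assumes cf: "complete_flag n F" and sU: "vec.subspace U"
  shows "j \<le> n \<Longrightarrow> vec.dim (U \<inter> F j) = card {i \<in> jumps F n U. i \<le> j}"
proof (induction j)
  case 0
  have "{i \<in> jumps F n U. i \<le> 0} = {}" unfolding jumps_def by auto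
  moreover have "U \<inter> F 0 = {0}" using flag_props(1)[OF cf] vec.subspace_0[OF sU] by auto
  ultimately show ?case using dim_zero_vec by simp
next
  case (Suc j)
  let ?H = "jumps F n U"
  have fin: "finite {i \<in> ?H. i \<le> j}" by simp
  have sA: "vec.subspace (U \<inter> F j)" and sB: "vec.subspace (U \<inter> F (Suc j))"
    using flag_props(3)[OF cf, of j] flag_props(3)[OF cf, of "Suc j"] Suc.prems sU vec.subspace_inter by auto
  have AB: "U \<inter> F j \<subseteq> U \<inter> F (Suc j)" using flag_props(5)[OF cf, of j "Suc j"] Suc.prems by auto
  have up: "vec.dim (U \<inter> F (Suc j)) + vec.dim (F j) \<le> vec.dim (U \<inter> F j) + vec.dim (F (Suc j))"
    using dim_int_step[OF sU flag_props(3)[OF cf] flag_props(3)[OF cf]] Suc.prems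
      flag_props(5)[OF cf, of j "Suc j"] by auto
  then have up': "vec.dim (U \<inter> F (Suc j)) \<le> vec.dim (U \<inter> F j) + 1"
    using flag_props(4)[OF cf, of j] flag_props(4)[OF cf, of "Suc j"] Suc.prems by simp
  have IH: "vec.dim (U \<inter> F j) = card {i \<in> ?H. i \<le> j}" using Suc by simp
  show ?case
  proof (cases "U \<inter> F (Suc j) = U \<inter> F j")
    case True
    then have "Suc j \<notin> ?H" unfolding jumps_def by simp
    then have "{i \<in> ?H. i \<le> Suc j} = {i \<in> ?H. i \<le> j}" by (auto simp: le_Suc_eq)
    then show ?thesis using IH True by simp
  next
    case False
    then have "Suc j \<in> ?H" unfolding jumps_def using Suc.prems by simp
    then have e: "{i \<in> ?H. i \<le> Suc j} = insert (Suc j) {i \<in> ?H. i \<le> j}" by (auto simp: le_Suc_eq)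
    have e1: "vec.span (U \<inter> F j) = U \<inter> F j" using sA by simp
    have e2: "vec.span (U \<inter> F (Suc j)) = U \<inter> F (Suc j)" using sB by simp
    have "vec.span (U \<inter> F j) \<subset> vec.span (U \<inter> F (Suc j))" unfolding e1 e2 using AB False by blast
    then have "vec.dim (U \<inter> F j) < vec.dim (U \<inter> F (Suc j))" by (rule vec.dim_psubset)
    then have "vec.dim (U \<inter> F (Suc j)) = vec.dim (U \<inter> F j) + 1" using up' by simp
    then show ?thesis using IH e fin by simp
  qed
qed

lemma dim_mono_flag:
  fixes F :: "nat \<Rightarrow> (complex^'n) set" and S :: "(complex^'n) set"
  assumes cf: "complete_flag n F" "i \<le> j" "j \<le> n"
  shows "vec.dim (S \<inter> F i) \<le> vec.dim (S \<inter> F j)"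
  using flag_props(5)[OF cf] by (intro vec.dim_subset) auto

lemma card_split:
  assumes "H \<subseteq> {1..n}" "c \<le> n"
  shows "card {i\<in>H. i \<le> c} + card {i\<in>{1..n} - H. i \<le> c} = c"
proof -
  have "{i\<in>H. i \<le> c} \<union> {i\<in>{1..n} - H. i \<le> c} = {1..c}" using assms by auto
  moreover have "{i\<in>H. i \<le> c} \<inter> {i\<in>{1..n} - H. i \<le> c} = {}" by auto
  ultimately show ?thesis
    by (metis (no_types, lifting) card_Un_disjoint card_atLeastAtMost diff_Suc_1 finite_Un finite_atLeastAtMost)
qed


theorem lemma2:
  fixes F :: "nat \<Rightarrow> (complex^'n) set" and U :: "(complex^'n) set"
    and n r :: nat and I :: "nat set"
  assumes "n = CARD('n)"
    and "complete_flag n F"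
    and "I \<subseteq> {1..n}"
    and "schubert F I r U"
  shows "(\<forall>(X :: (complex^'n) set) P x.
            X \<subseteq> U \<and> P \<subseteq> {1..r} \<and> card P = x \<and> schubert (flagU F n U) P x X
            \<longrightarrow> schubert F (idx_sub I P) x X)
       \<and> (\<forall>(Z :: (complex^'n) set) P y.
            P \<subseteq> {1..n - r} \<and> card P = y \<and> schubert_quot U (flagW_pre F n U) P y Z
            \<longrightarrow> schubert F (idx_plus n I P) (r + y) Z)"
proof -
  note cf = assms(2)
  have finI: "finite I" and cI: "card I = r" and sU: "vec.subspace U" and dU: "vec.dim U = r"
    and schI: "\<And>a. a \<in> {1..r} \<Longrightarrow> a \<le> vec.dim (U \<inter> F (ith I a))"
    using assms(4) unfolding schubert_def by auto
  define H where "H = jumps F n U"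
  have Hsub: "H \<subseteq> {1..n}" unfolding H_def jumps_def by auto
  have finH: "finite H" using Hsub finite_subset by blast
  have dH: "\<And>j. j \<le> n \<Longrightarrow> vec.dim (U \<inter> F j) = card {i\<in>H. i \<le> j}"
    unfolding H_def using jump_count[OF cf sU] by blast
  have cH: "card H = r"
  proof -
    have "{i\<in>H. i \<le> n} = H" using Hsub by auto
    moreover have "U \<inter> F n = U" using flag_props(2)[OF cf] by simp
    ultimately show ?thesis using dH[of n] dU by simp
  qed
  have Inrange: "\<And>p. p \<in> {1..r} \<Longrightarrow> ith I p \<le> n"
  proof -
    fix p assume "p \<in> {1..r}"
    then have "p \<in> {1..card I}" using cI by simp
    then have "ith I p \<in> I" by (rule ith_mem[OF finI])
    then show "ith I p \<le> n" using assms(3) by auto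
  qed
  have Icnt: "\<And>j. j \<le> n \<Longrightarrow> card {i\<in>I. i \<le> j} \<le> vec.dim (U \<inter> F j)"
  proof -
    fix j assume jn: "j \<le> n"
    define b where "b = card {i\<in>I. i \<le> j}"
    show "card {i\<in>I. i \<le> j} \<le> vec.dim (U \<inter> F j)"
    proof (cases "b = 0")
      case True then show ?thesis unfolding b_def by linarith
    next
      case False
      have "b \<le> card I" unfolding b_def using finI by (intro card_mono) auto
      then have b1: "b \<in> {1..r}" using False cI by auto
      have "ith I b \<le> j" using ith_le[OF finI, of b j] False unfolding b_def by simp
      then have "vec.dim (U \<inter> F (ith I b)) \<le> vec.dim (U \<inter> F j)"
        using dim_mono_flag[OF cf _ jn] by blast
      then show ?thesis using schI[OF b1] unfolding b_def by simp
    qed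
  qed
  have hI: "\<And>p. p \<in> {1..r} \<Longrightarrow> ith H p \<le> ith I p"
  proof -
    fix p assume p: "p \<in> {1..r}"
    have "p \<le> card {i\<in>H. i \<le> ith I p}" using schI[OF p] dH[OF Inrange[OF p]] by simp
    then show "ith H p \<le> ith I p" using ith_le[OF finH, of p] p by simp
  qed
  have part1: "\<forall>(X :: (complex^'n) set) P x.
            X \<subseteq> U \<and> P \<subseteq> {1..r} \<and> card P = x \<and> schubert (flagU F n U) P x X
            \<longrightarrow> schubert F (idx_sub I P) x X"
  proof (intro allI impI)
    fix X :: "(complex^'n) set" and P x
    assume h: "X \<subseteq> U \<and> P \<subseteq> {1..r} \<and> card P = x \<and> schubert (flagU F n U) P x X"
    then have XU: "X \<subseteq> U" and Pr: "P \<subseteq> {1..r}" and cP: "card P = x" and finP: "finite P"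
      and sX: "vec.subspace X" and dX: "vec.dim X = x"
      and sch: "\<And>a. a \<in> {1..x} \<Longrightarrow> a \<le> vec.dim (X \<inter> (F (ith H (ith P a)) \<inter> U))"
      unfolding schubert_def flagU_def H_def by auto
    have Pr': "P \<subseteq> {1..card I}" using Pr cI by simp
    have inj: "inj_on (ith I) P" using inj_on_subset[OF inj_ith[OF finI] Pr'] .
    have mono: "\<And>s t. s \<in> P \<Longrightarrow> t \<in> P \<Longrightarrow> s < t \<Longrightarrow> ith I s < ith I t"
    proof -
      fix s t assume "s \<in> P" "t \<in> P" "s < t"
      moreover have "s \<in> {1..card I}" "t \<in> {1..card I}" using Pr' \<open>s \<in> P\<close> \<open>t \<in> P\<close> by auto
      ultimately show "ith I s < ith I t" using ith_less[OF finI, of s t] by simp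
    qed
    show "schubert F (idx_sub I P) x X"
      unfolding schubert_def idx_sub_def
    proof (intro conjI ballI)
      show "finite (ith I ` P)" using finP by simp
      show "card (ith I ` P) = x" using inj cP by (simp add: card_image)
      show "vec.subspace X" by (fact sX)
      show "vec.dim X = x" by (fact dX)
      fix a assume a: "a \<in> {1..x}"
      have a': "a \<in> {1..card P}" using a cP by simp
      have e: "ith (ith I ` P) a = ith I (ith P a)" by (rule ith_image[OF finP _ a']) (rule mono)
      have pP: "ith P a \<in> P" using ith_mem[OF finP a'] .
      then have pr: "ith P a \<in> {1..r}" using Pr by blast
      have "X \<inter> (F (ith H (ith P a)) \<inter> U) \<subseteq> X \<inter> F (ith I (ith P a))"
        using flag_props(5)[OF cf hI[OF pr] Inrange[OF pr]] by blast
      then have "vec.dim (X \<inter> (F (ith H (ith P a)) \<inter> U)) \<le> vec.dim (X \<inter> F (ith I (ith P a)))"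
        by (rule vec.dim_subset)
      then show "a \<le> vec.dim (X \<inter> F (ith (ith I ` P) a))" using sch[OF a] e by simp
    qed
  qed
  have part2: "\<forall>(Z :: (complex^'n) set) P y.
            P \<subseteq> {1..n - r} \<and> card P = y \<and> schubert_quot U (flagW_pre F n U) P y Z
            \<longrightarrow> schubert F (idx_plus n I P) (r + y) Z"
  proof (intro allI impI)
    fix Z :: "(complex^'n) set" and P y
    assume h: "P \<subseteq> {1..n - r} \<and> card P = y \<and> schubert_quot U (flagW_pre F n U) P y Z"
    define Hc where "Hc = {1..n} - H"
    define Ic where "Ic = {1..n} - I"
    have Pr: "P \<subseteq> {1..n - r}" and cP: "card P = y" and finP: "finite P"
      and sZ: "vec.subspace Z" and UZ: "U \<subseteq> Z" and dZ0: "vec.dim Z - vec.dim U = y"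
      and sch: "\<And>a. a \<in> {1..y} \<Longrightarrow> a \<le> vec.dim (Z \<inter> vec.span (U \<union> F (ith Hc (ith P a)))) - vec.dim U"
      using h unfolding schubert_quot_def flagW_pre_def H_def Hc_def by auto
    have finIc: "finite Ic" and finHc: "finite Hc" unfolding Ic_def Hc_def by auto
    have cIc: "card Ic = n - r" unfolding Ic_def using assms(3) cI finI
      by (simp add: card_Diff_subset)
    have cHc: "card Hc = n - r" unfolding Hc_def using Hsub cH finH
      by (simp add: card_Diff_subset)
    have Pr': "P \<subseteq> {1..card Ic}" using Pr cIc by simp
    have inj: "inj_on (ith Ic) P" using inj_on_subset[OF inj_ith[OF finIc] Pr'] .
    have mono: "\<And>s t. s \<in> P \<Longrightarrow> t \<in> P \<Longrightarrow> s < t \<Longrightarrow> ith Ic s < ith Ic t"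
    proof -
      fix s t assume "s \<in> P" "t \<in> P" "s < t"
      moreover have "s \<in> {1..card Ic}" "t \<in> {1..card Ic}" using Pr' \<open>s \<in> P\<close> \<open>t \<in> P\<close> by auto
      ultimately show "ith Ic s < ith Ic t" using ith_less[OF finIc, of s t] by simp
    qed
    define Q where "Q = ith Ic ` P"
    have finQ: "finite Q" unfolding Q_def using finP by simp
    have cQ: "card Q = y" unfolding Q_def using inj cP by (simp add: card_image)
    have QIc: "Q \<subseteq> Ic" unfolding Q_def using ith_mem[OF finIc] Pr' by blast
    have IQ: "I \<inter> Q = {}" using QIc unfolding Ic_def by blast
    define J where "J = I \<union> Q"
    have finJ: "finite J" unfolding J_def using finI finQ by simp
    have cJ: "card J = r + y" unfolding J_def using card_Un_disjoint[OF finI finQ IQ] cI cQ by simp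
    have Jsub: "J \<subseteq> {1..n}" unfolding J_def using assms(3) QIc unfolding Ic_def by blast
    have dUZ: "vec.dim U \<le> vec.dim Z" using UZ by (rule vec.dim_subset)
    have dZ: "vec.dim Z = r + y" using dZ0 dUZ dU by simp
    have key: "\<And>j. j \<le> n \<Longrightarrow> card {i\<in>J. i \<le> j} \<le> vec.dim (Z \<inter> F j)"
    proof -
      fix j assume jn: "j \<le> n"
      have cs: "card {i\<in>J. i \<le> j} = card {i\<in>I. i \<le> j} + card {i\<in>Q. i \<le> j}"
      proof -
        have "{i\<in>J. i \<le> j} = {i\<in>I. i \<le> j} \<union> {i\<in>Q. i \<le> j}" unfolding J_def by blast
        moreover have "{i\<in>I. i \<le> j} \<inter> {i\<in>Q. i \<le> j} = {}" using IQ by blast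
        ultimately show ?thesis using finI finQ by (simp add: card_Un_disjoint)
      qed
      define a where "a = card {i\<in>Q. i \<le> j}"
      have sF: "\<And>i. i \<le> n \<Longrightarrow> vec.subspace (F i)" using flag_props(3)[OF cf] by blast
      have UZj: "vec.dim (U \<inter> F j) \<le> vec.dim (Z \<inter> F j)"
        using UZ by (intro vec.dim_subset) blast
      show "card {i\<in>J. i \<le> j} \<le> vec.dim (Z \<inter> F j)"
      proof (cases "a = 0")
        case True
        then show ?thesis using cs Icnt[OF jn] UZj unfolding a_def by linarith
      next
        case False
        have "a \<le> card Q" unfolding a_def using finQ by (intro card_mono) auto
        then have a1: "a \<in> {1..y}" using False cQ by auto
        then have a': "a \<in> {1..card P}" using cP by simp
        define p where "p = ith P a"
        have pP: "p \<in> P" unfolding p_def using ith_mem[OF finP a'] .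
        have pr: "p \<in> {1..card Ic}" using pP Pr' by blast
        have eQ: "ith Q a = ith Ic p" unfolding Q_def p_def
          by (rule ith_image[OF finP _ a']) (rule mono)
        have "ith Q a \<le> j" using ith_le[OF finQ, of a j] False unfolding a_def by simp
        then have icj: "ith Ic p \<le> j" using eQ by simp
        have prc: "p \<in> {1..card Hc}" using pr cIc cHc by simp
        define c where "c = ith Hc p"
        have cHc_mem: "c \<in> Hc" unfolding c_def using ith_mem[OF finHc prc] .
        then have cn: "c \<le> n" unfolding Hc_def by auto
        have A: "a + r \<le> vec.dim (Z \<inter> vec.span (U \<union> F c))"
          using sch[OF a1] False dU unfolding c_def p_def by linarith
        have cntHc: "card {i\<in>Hc. i \<le> c} = p" unfolding c_def using cnt_ith[OF finHc prc] .
        have split: "card {i\<in>H. i \<le> c} + card {i\<in>Hc. i \<le> c} = c"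
          unfolding Hc_def using card_split[OF Hsub cn] .
        have dUc: "vec.dim (U \<inter> F c) + p = c" using dH[OF cn] split cntHc by simp
        have K: "vec.dim (Z \<inter> vec.span (U \<union> F c)) + vec.dim (U \<inter> F c) \<le> vec.dim (Z \<inter> F c) + r"
          using dim_quot_ineq[OF sZ sU sF[OF cn] UZ] dU by simp
        have cntIc: "p \<le> card {i\<in>Ic. i \<le> j}"
        proof -
          have "card {i\<in>Ic. i \<le> ith Ic p} = p" using cnt_ith[OF finIc pr] .
          moreover have "card {i\<in>Ic. i \<le> ith Ic p} \<le> card {i\<in>Ic. i \<le> j}"
            using icj finIc by (intro card_mono) auto
          ultimately show ?thesis by simp
        qed
        have splitI: "card {i\<in>I. i \<le> j} + card {i\<in>Ic. i \<le> j} = j"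
          unfolding Ic_def using card_split[OF assms(3) jn] .
        show ?thesis
        proof (cases "c \<le> j")
          case True
          have Kj: "vec.dim (Z \<inter> vec.span (U \<union> F j)) + vec.dim (U \<inter> F j) \<le> vec.dim (Z \<inter> F j) + r"
            using dim_quot_ineq[OF sZ sU sF[OF jn] UZ] dU by simp
          have "F c \<subseteq> F j" using flag_props(5)[OF cf True jn] .
          then have "vec.span (U \<union> F c) \<subseteq> vec.span (U \<union> F j)" by (intro vec.span_mono) blast
          then have "vec.dim (Z \<inter> vec.span (U \<union> F c)) \<le> vec.dim (Z \<inter> vec.span (U \<union> F j))"
            by (intro vec.dim_subset) blast
          then show ?thesis using A Kj Icnt[OF jn] cs unfolding a_def by linarith
        next
          case False
          have G: "vec.dim (Z \<inter> F c) + vec.dim (F j) \<le> vec.dim (Z \<inter> F j) + vec.dim (F c)"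
            using dim_int_step[OF sZ sF[OF jn] sF[OF cn]] flag_props(5)[OF cf, of j c] False cn by simp
          have "vec.dim (F j) = j" "vec.dim (F c) = c" using flag_props(4)[OF cf] jn cn by auto
          then show ?thesis using G A K dUc cntIc splitI cs unfolding a_def by linarith
        qed
      qed
    qed
    show "schubert F (idx_plus n I P) (r + y) Z"
      unfolding schubert_def
    proof (intro conjI ballI)
      have eJ: "idx_plus n I P = J" unfolding idx_plus_def J_def Q_def Ic_def by simp
      show "finite (idx_plus n I P)" using finJ eJ by simp
      show "card (idx_plus n I P) = r + y" using cJ eJ by simp
      show "vec.subspace Z" by (fact sZ)
      show "vec.dim Z = r + y" by (fact dZ)
      fix b assume b: "b \<in> {1..r + y}"
      then have b': "b \<in> {1..card J}" using cJ by simp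
      have m: "ith J b \<in> J" using ith_mem[OF finJ b'] .
      then have "ith J b \<le> n" using Jsub by auto
      then have "card {i\<in>J. i \<le> ith J b} \<le> vec.dim (Z \<inter> F (ith J b))" by (rule key)
      then show "b \<le> vec.dim (Z \<inter> F (ith (idx_plus n I P) b))"
        using cnt_ith[OF finJ b'] eJ by simp
    qed
  qed
  show ?thesis using part1 part2 by blast
qed

end
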